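(* Let $\mathcal{H} = \bigotimes_{i=1}^n \mathcal{H}_i$, $H \in \mathrm{Herm}(\mathcal{H})$, $\mathcal{A}$ an ancillary Hilbert space and $H' \in \mathrm{Herm}(\mathcal{H}\otimes\mathcal{A})$. If $(H',\mathcal{A})$ is an $(\eta,\epsilon)$-gadget for $H$, then $(H',\mathcal{A})$ satisfies the $(\zeta,\epsilon)$-gadget property for $H$ with $\zeta = O(\eta)$.
   Context: $\|\cdot\|$ denotes the operator norm, $\mathrm{Proj}(\cdot)$ the set of orthogonal projectors and $\mathrm{U}(\cdot)$ the unitary group. $(H',\mathcal{A})$ is an $(\eta,\epsilon)$-gadget for $H$ if there exist $P \in \mathrm{Proj}(\mathcal{A})\setminus\{0\}$ and $U \in \mathrm{U}(\mathcal{H}\otimes\mathcal{A})$ with $\|U - \mathbb{I}\| \le \eta$ and $\|P'H'P' - U(H\otimes P)U^\dagger\| \le \epsilon$, where $P' = U(\mathbb{I}\otimes P)U^\dagger$. $(H',\mathcal{A})$ satisfies the $(\zeta,\epsilon)$-gadget property for $H$ if there exist $P' \in \mathrm{Proj}(\mathcal{H}\otimes\mathcal{A})$ and $\tilde P \in \mathrm{Proj}(\mathcal{A})\setminus\{0\}$ such that for every $H_{\mathrm{else}} \in \mathrm{Herm}(\mathcal{H})$ there is a unitary $\tilde U_{H_{\mathrm{else}}} \in \mathrm{U}(\mathcal{H}\otimes\mathcal{A})$ with $\|P'(H' + H_{\mathrm{else}}\otimes\mathbb{I})P' - \tilde U_{H_{\mathrm{else}}}((H+H_{\mathrm{else}})\otimes\tilde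 P)\tilde U_{H_{\mathrm{else}}}^\dagger\| \le \epsilon + \zeta\|H_{\mathrm{else}}\|$. *)

theory Defs
  imports "HOL-Analysis.Analysis"
begin

text \<open>Finite-dimensional Hilbert spaces are modelled as complex^'i for a finite
basis index type 'i; operators are square complex matrices complex^'i^'i.
The system space H has basis 'h, the ancilla A has basis 'a, and the tensor
product H \<otimes> A has basis 'h \<times> 'a.\<close>

definition cadj :: "complex^'n^'m \<Rightarrow> complex^'m^'n" where
  "cadj A = (\<chi> i j. cnj (A $ j $ i))"

definition hermitian :: "complex^'n^'n \<Rightarrow> bool" where
  "hermitian A \<longleftrightarrow> cadj A = A"

definition unitary :: "complex^'n^'n \<Rightarrow> bool" where
  "unitary U \<longleftrightarrow> U ** cadj U = mat 1 \<and> cadj U ** U = mat 1"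

definition projector :: "complex^'n^'n \<Rightarrow> bool" where
  "projector P \<longleftrightarrow> hermitian P \<and> P ** P = P"

definition opnorm :: "complex^'n^'m \<Rightarrow> real" where
  "opnorm A = onorm (\<lambda>x. A *v x)"

definition kron :: "complex^'h::finite^'h \<Rightarrow> complex^'a::finite^'a \<Rightarrow> complex^('h \<times> 'a)^('h \<times> 'a)" where
  "kron A B = (\<chi> p q. A $ fst p $ fst q * B $ snd p $ snd q)"

definition is_gadget ::
  "real \<Rightarrow> real \<Rightarrow> complex^'h::finite^'h \<Rightarrow> complex^('h \<times> 'a::finite)^('h \<times> 'a) \<Rightarrow> bool" where
  "is_gadget \<eta> \<epsilon> H H' \<longleftrightarrow>
     (\<exists>(P::complex^'a^'a) U. projector P \<and> P \<noteq> 0 \<and> unitary U \<and>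
        opnorm (U - mat 1) \<le> \<eta> \<and>
        (let P' = U ** kron (mat 1) P ** cadj U in
           opnorm (P' ** H' ** P' - U ** kron H P ** cadj U) \<le> \<epsilon>))"

definition gadget_property ::
  "real \<Rightarrow> real \<Rightarrow> complex^'h::finite^'h \<Rightarrow> complex^('h \<times> 'a::finite)^('h \<times> 'a) \<Rightarrow> bool" where
  "gadget_property \<zeta> \<epsilon> H H' \<longleftrightarrow>
     (\<exists>P' (Pt::complex^'a^'a). projector P' \<and> projector Pt \<and> Pt \<noteq> 0 \<and>
        (\<forall>Helse::complex^'h^'h. hermitian Helse \<longrightarrow>
           (\<exists>Ut. unitary Ut \<and>
              opnorm (P' ** (H' + kron Helse (mat 1)) ** P'
                      - Ut ** kron (H + Helse) Pt ** cadj Ut)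
                \<le> \<epsilon> + \<zeta> * opnorm Helse)))"

end

theory Submission
  imports Defs
begin

lemma bl_mv: "bounded_linear (\<lambda>x. (A::complex^'n::finite^'m::finite) *v x)"
  by simp

lemma opnorm_nonneg: "0 \<le> opnorm A"
  unfolding opnorm_def by (rule onorm_pos_le) simp

lemma opnorm_apply: "norm (A *v x) \<le> opnorm A * norm (x::complex^'n::finite)"
  unfolding opnorm_def by (rule onorm) simp

lemma opnorm_leI: "(\<And>x. norm (A *v x) \<le> b * norm (x::complex^'n::finite)) \<Longrightarrow> opnorm A \<le> b"
  unfolding opnorm_def by (rule onorm_le)

lemma opnorm_mult: "opnorm ((A::complex^'n::finite^'m::finite) ** (B::complex^'k::finite^'n)) \<le> opnorm A * opnorm B"
proof (rule opnorm_leI)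
  fix x
  have "norm ((A ** B) *v x) = norm (A *v (B *v x))" by (simp add: matrix_vector_mul_assoc)
  also have "\<dots> \<le> opnorm A * norm (B *v x)" by (rule opnorm_apply)
  also have "\<dots> \<le> opnorm A * (opnorm B * norm x)"
    by (intro mult_left_mono opnorm_apply opnorm_nonneg)
  finally show "norm ((A ** B) *v x) \<le> opnorm A * opnorm B * norm x" by (simp add: mult.assoc)
qed

lemma opnorm_add: "opnorm ((A::complex^'n::finite^'m::finite) + B) \<le> opnorm A + opnorm B"
proof (rule opnorm_leI)
  fix x
  have "norm ((A + B) *v x) \<le> norm (A *v x) + norm (B *v x)"
    by (simp add: matrix_vector_mult_add_rdistrib norm_triangle_ineq)
  also have "\<dots> \<le> opnorm A * norm x + opnorm B * norm x"
    by (intro add_mono opnorm_apply)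
  finally show "norm ((A + B) *v x) \<le> (opnorm A + opnorm B) * norm x" by (simp add: algebra_simps)
qed

lemma opnorm_minus_commute: "opnorm ((A::complex^'n::finite^'m::finite) - B) = opnorm (B - A)"
proof -
  have "(\<lambda>x. (A - B) *v x) = (\<lambda>x. - ((B - A) *v x))"
    by (rule ext) (simp add: matrix_vector_mult_diff_rdistrib)
  then show ?thesis unfolding opnorm_def by (simp add: onorm_neg)
qed

lemma opnorm_diff: "opnorm ((A::complex^'n::finite^'m::finite) - B) \<le> opnorm A + opnorm B"
proof (rule opnorm_leI)
  fix x
  have "norm ((A - B) *v x) \<le> norm (A *v x) + norm (B *v x)"
    by (simp add: matrix_vector_mult_diff_rdistrib norm_triangle_ineq4)
  also have "\<dots> \<le> opnorm A * norm x + opnorm B * norm x"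
    by (intro add_mono opnorm_apply)
  finally show "norm ((A - B) *v x) \<le> (opnorm A + opnorm B) * norm x" by (simp add: algebra_simps)
qed

definition cinner :: "complex^'n::finite \<Rightarrow> complex^'n \<Rightarrow> complex" where
  "cinner x y = (\<Sum>i\<in>UNIV. cnj (x$i) * y$i)"

lemma inner_cinner: "inner x y = Re (cinner x y)"
  by (simp add: cinner_def inner_vec_def inner_complex_def Re_sum)

lemma cinner_adj: "cinner ((A::complex^'n::finite^'m::finite) *v x) y = cinner x (cadj A *v y)"
proof -
  have "cinner (A *v x) y = (\<Sum>i\<in>UNIV. \<Sum>j\<in>UNIV. cnj (A$i$j) * cnj (x$j) * y$i)"
    unfolding cinner_def matrix_vector_mult_def by (simp add: sum_distrib_right)
  also have "\<dots> = (\<Sum>j\<in>UNIV. \<Sum>i\<in>UNIV. cnj (A$i$j) * cnj (x$j) * y$i)"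
    by (rule sum.swap)
  also have "\<dots> = cinner x (cadj A *v y)"
    unfolding cinner_def matrix_vector_mult_def cadj_def by (simp add: sum_distrib_left mult_ac)
  finally show ?thesis .
qed

lemma inner_adj: "inner ((A::complex^'n::finite^'m::finite) *v x) y = inner x (cadj A *v y)"
  by (simp add: inner_cinner cinner_adj)

lemma unitary_norm: assumes "unitary U" shows "norm (U *v x) = norm x"
proof -
  have "(norm (U *v x))^2 = inner x (cadj U *v (U *v x))"
    by (simp add: power2_norm_eq_inner inner_adj)
  also have "\<dots> = (norm x)^2" using assms
    by (simp add: unitary_def matrix_vector_mul_assoc power2_norm_eq_inner)
  finally show ?thesis by simp
qed

lemma unitary_opnorm: "unitary U \<Longrightarrow> opnorm U \<le> 1"
  by (rule opnorm_leI) (simp add: unitary_norm)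

lemma cadj_cadj[simp]: "cadj (cadj A) = A"
  by (simp add: cadj_def vec_eq_iff)

lemma unitary_cadj: "unitary U \<Longrightarrow> unitary (cadj U)"
  by (auto simp: unitary_def)

lemma projector_norm: assumes "projector P" shows "norm (P *v x) \<le> norm x"
proof -
  have "(norm (P *v x))^2 = inner x (cadj P *v (P *v x))"
    by (simp add: power2_norm_eq_inner inner_adj)
  also have "\<dots> = inner x (P *v x)" using assms
    by (simp add: projector_def hermitian_def matrix_vector_mul_assoc)
  also have "\<dots> \<le> norm x * norm (P *v x)" by (rule norm_cauchy_schwarz)
  finally have "norm (P *v x) * norm (P *v x) \<le> norm x * norm (P *v x)" by (simp add: power2_eq_square)
  then show ?thesis
    by (metis mult_right_le_imp_le norm_ge_zero order_le_less)
qed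

lemma projector_opnorm: "projector P \<Longrightarrow> opnorm P \<le> 1"
  by (rule opnorm_leI) (simp add: projector_norm)


lemma kron_mult: "kron A B ** kron C D = kron (A ** C) (B ** D)"
proof -
  have "(\<Sum>r\<in>UNIV. A $ fst p $ fst r * B $ snd p $ snd r * (C $ fst r $ fst q * D $ snd r $ snd q)) =
        (\<Sum>r1\<in>UNIV. A $ fst p $ r1 * C $ r1 $ fst q) * (\<Sum>r2\<in>UNIV. B $ snd p $ r2 * D $ r2 $ snd q)"
    for p q :: "'a::finite \<times> 'b::finite"
    by (simp add: sum_product sum.cartesian_product case_prod_unfold mult_ac)
  then show ?thesis
    by (simp add: kron_def matrix_matrix_mult_def vec_eq_iff)
qed

lemma kron_add_left: "kron (A + B) C = kron A C + kron B C"
  by (simp add: kron_def vec_eq_iff distrib_right)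

lemma cadj_kron: "cadj (kron A B) = kron (cadj A) (cadj B)"
  by (simp add: kron_def cadj_def vec_eq_iff)

lemma cadj_mult: "cadj ((A::complex^'n::finite^'m::finite) ** (B::complex^'k::finite^'n)) = cadj B ** cadj A"
  by (simp add: cadj_def matrix_matrix_mult_def vec_eq_iff mult.commute)

lemma cadj_mat1: "cadj (mat 1 :: complex^'n::finite^'n) = mat 1"
  by (simp add: cadj_def mat_def vec_eq_iff)

lemma mm_add_rdistrib: "((B::complex^'n::finite^'m::finite) + C) ** (A::complex^'k::finite^'n) = B ** A + C ** A"
  by (simp add: matrix_matrix_mult_def vec_eq_iff distrib_right sum.distrib)

lemma mm_diff_rdistrib: "((B::complex^'n::finite^'m::finite) - C) ** (A::complex^'k::finite^'n) = B ** A - C ** A"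
  by (simp add: matrix_matrix_mult_def vec_eq_iff left_diff_distrib sum_subtractf)

lemma mm_diff_ldistrib: "(A::complex^'n::finite^'m::finite) ** ((B::complex^'k::finite^'n) - C) = A ** B - A ** C"
  by (simp add: matrix_matrix_mult_def vec_eq_iff right_diff_distrib sum_subtractf)

lemma norm_sq_vec: "(norm (x::complex^'n::finite))^2 = (\<Sum>i\<in>UNIV. (norm (x$i))^2)"
  by (simp add: power2_norm_eq_inner inner_vec_def)

lemma opnorm_kron_id: "opnorm (kron (A::complex^'h::finite^'h) (mat 1 :: complex^'a::finite^'a)) \<le> opnorm A"
proof (rule opnorm_leI)
  fix x :: "complex^('h \<times> 'a)"
  define xa where "xa b = (\<chi> h. x $ (h, b))" for b
  have comp: "(kron A (mat 1) *v x) $ (h, b) = (A *v xa b) $ h" for h b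
  proof -
    have "(kron A (mat 1) *v x) $ (h, b) = (\<Sum>r\<in>UNIV. \<Sum>s\<in>UNIV. A $ h $ r * (if b = s then 1 else 0) * x $ (r, s))"
      by (simp add: kron_def matrix_vector_mult_def mat_def sum.cartesian_product case_prod_unfold)
    also have "\<dots> = (\<Sum>r\<in>UNIV. A $ h $ r * x $ (r, b))"
      by (simp add: if_distrib if_distribR cong: if_cong)
    finally show ?thesis by (simp add: matrix_vector_mult_def xa_def)
  qed
  have split: "(norm (y::complex^('h \<times> 'a)))^2 = (\<Sum>b\<in>UNIV. (norm (\<chi> h. y $ (h, b)))^2)" for y
    by (simp add: norm_sq_vec) (subst sum.swap, simp add: sum.cartesian_product case_prod_unfold)
  have "(norm (kron A (mat 1) *v x))^2 = (\<Sum>b\<in>UNIV. (norm (A *v xa b))^2)"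
    by (subst split) (simp add: comp vec_lambda_eta)
  also have "\<dots> \<le> (\<Sum>b\<in>UNIV. (opnorm A * norm (xa b))^2)"
    by (intro sum_mono power_mono opnorm_apply norm_ge_zero)
  also have "\<dots> = (opnorm A * norm x)^2"
    by (simp add: power_mult_distrib split[of x] sum_distrib_left xa_def)
  finally show "norm (kron A (mat 1) *v x) \<le> opnorm A * norm x"
    using opnorm_nonneg[of A] by (simp add: power2_le_iff_abs_le)
qed


lemma mm_cancel: "unitary U \<Longrightarrow> (A ** cadj U) ** U = A"
  by (simp add: unitary_def matrix_mul_assoc[symmetric])

theorem theorem3p1:
  fixes H :: "complex^'h::finite^'h" and H' :: "complex^('h \<times> 'a::finite)^('h \<times> 'a)"
    and \<eta> \<epsilon> :: real
  assumes "hermitian H" and "hermitian H'"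
    and "is_gadget \<eta> \<epsilon> H H'"
  shows "gadget_property (2 * \<eta>) \<epsilon> H H'"
proof -
  obtain P :: "complex^'a^'a" and U where PP: "projector P" "P \<noteq> 0" and UU: "unitary U"
    and Ueta: "opnorm (U - mat 1) \<le> \<eta>"
    and main: "opnorm ((U ** kron (mat 1) P ** cadj U) ** H' ** (U ** kron (mat 1) P ** cadj U)
                 - U ** kron H P ** cadj U) \<le> \<epsilon>"
    using assms(3) unfolding is_gadget_def Let_def by blast
  define K where "K = kron (mat 1 :: complex^'h^'h) P"
  define P' where "P' = U ** K ** cadj U"
  have eta0: "0 \<le> \<eta>" using Ueta opnorm_nonneg order_trans by blast
  have Ph: "cadj P = P" "P ** P = P" using PP by (auto simp: projector_def hermitian_def)
  have KK: "K ** K = K" by (simp add: K_def kron_mult Ph)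
  have KK': "\<And>A::complex^('h\<times>'a)^('h\<times>'a). A ** K ** K = A ** K"
    by (simp add: KK flip: matrix_mul_assoc)
  have Kh: "cadj K = K" by (simp add: K_def cadj_kron cadj_mat1 Ph)
  have cU: "cadj U ** U = mat 1" "U ** cadj U = mat 1" using UU by (auto simp: unitary_def)
  have projP': "projector P'"
  proof -
    have "cadj P' = P'" by (simp add: P'_def cadj_mult Kh matrix_mul_assoc)
    moreover have "P' ** P' = P'"
      using KK' by (simp add: P'_def matrix_mul_assoc mm_cancel[OF UU])
    ultimately show ?thesis by (simp add: projector_def hermitian_def)
  qed
  have nP': "opnorm P' \<le> 1" by (rule projector_opnorm[OF projP'])
  show ?thesis
    unfolding gadget_property_def
  proof (rule exI[of _ P'], rule exI[of _ P], intro conjI allI impI)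
    show "projector P'" by fact
    show "projector P" "P \<noteq> 0" by fact+
    fix Helse :: "complex^'h^'h"
    assume "hermitian Helse"
    define X where "X = kron Helse (mat 1 :: complex^'a^'a)"
    define E1 where "E1 = P' ** H' ** P' - U ** kron H P ** cadj U"
    define E2 where "E2 = P' ** (X - U ** X ** cadj U) ** P'"
    have E1: "opnorm E1 \<le> \<epsilon>" using main by (simp add: E1_def P'_def K_def)
    have KXK: "kron Helse P = K ** X ** K"
      by (simp add: K_def X_def kron_mult Ph)
    have e3: "U ** kron Helse P ** cadj U = P' ** (U ** X ** cadj U) ** P'"
      by (simp add: KXK P'_def matrix_mul_assoc mm_cancel[OF UU])
    have eq: "P' ** (H' + X) ** P' - U ** kron (H + Helse) P ** cadj U = E1 + E2"
      by (simp add: E1_def E2_def matrix_add_ldistrib mm_add_rdistrib mm_diff_ldistrib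
          mm_diff_rdistrib kron_add_left e3)
    have Xd: "X - U ** X ** cadj U = (mat 1 - U) ** X + U ** X ** (mat 1 - cadj U)"
      by (simp add: mm_diff_ldistrib mm_diff_rdistrib)
    have cd: "mat 1 - cadj U = cadj U ** (U - mat 1)"
      by (simp add: mm_diff_ldistrib cU)
    have nU: "opnorm U \<le> 1" "opnorm (cadj U) \<le> 1"
      using UU unitary_cadj unitary_opnorm by blast+
    have nX: "opnorm X \<le> opnorm Helse" unfolding X_def by (rule opnorm_kron_id)
    have a1: "opnorm ((mat 1 - U) ** X) \<le> \<eta> * opnorm X"
    proof -
      have "opnorm ((mat 1 - U) ** X) \<le> opnorm (mat 1 - U) * opnorm X" by (rule opnorm_mult)
      also have "\<dots> \<le> \<eta> * opnorm X"
        using Ueta opnorm_minus_commute[of "mat 1" U]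
        by (intro mult_right_mono opnorm_nonneg) simp
      finally show ?thesis .
    qed
    have b1: "opnorm (mat 1 - cadj U) \<le> \<eta>"
    proof -
      have "opnorm (mat 1 - cadj U) \<le> opnorm (cadj U) * opnorm (U - mat 1)"
        unfolding cd by (rule opnorm_mult)
      also have "\<dots> \<le> 1 * \<eta>" using nU Ueta
        by (intro mult_mono opnorm_nonneg) auto
      finally show ?thesis by simp
    qed
    have a2: "opnorm (U ** X ** (mat 1 - cadj U)) \<le> \<eta> * opnorm X"
    proof -
      have "opnorm (U ** X ** (mat 1 - cadj U)) \<le> opnorm (U ** X) * opnorm (mat 1 - cadj U)"
        by (rule opnorm_mult)
      also have "\<dots> \<le> (opnorm U * opnorm X) * opnorm (mat 1 - cadj U)"
        by (intro mult_right_mono opnorm_mult opnorm_nonneg)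
      also have "\<dots> \<le> (1 * opnorm X) * \<eta>"
        using nU b1 by (intro mult_mono opnorm_nonneg mult_nonneg_nonneg) auto
      finally show ?thesis by (simp add: mult.commute)
    qed
    have nXd: "opnorm (X - U ** X ** cadj U) \<le> 2 * \<eta> * opnorm Helse"
    proof -
      have "opnorm (X - U ** X ** cadj U) \<le> \<eta> * opnorm X + \<eta> * opnorm X"
        unfolding Xd using opnorm_add a1 a2 by (meson add_mono order_trans)
      also have "\<dots> \<le> 2 * \<eta> * opnorm Helse" using nX eta0
        by (simp add: mult_left_mono)
      finally show ?thesis .
    qed
    have E2: "opnorm E2 \<le> 2 * \<eta> * opnorm Helse"
    proof -
      have "opnorm E2 \<le> opnorm (P' ** (X - U ** X ** cadj U)) * opnorm P'"
        unfolding E2_def by (rule opnorm_mult)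
      also have "\<dots> \<le> (opnorm P' * opnorm (X - U ** X ** cadj U)) * 1"
        using nP' by (intro mult_mono opnorm_mult opnorm_nonneg mult_nonneg_nonneg) auto
      also have "\<dots> \<le> (1 * opnorm (X - U ** X ** cadj U)) * 1"
        using nP' by (intro mult_mono opnorm_nonneg) (auto simp: opnorm_nonneg)
      finally show ?thesis using nXd by simp
    qed
    show "\<exists>Ut. unitary Ut \<and> opnorm (P' ** (H' + kron Helse (mat 1)) ** P' - Ut ** kron (H + Helse) P ** cadj Ut)
            \<le> \<epsilon> + 2 * \<eta> * opnorm Helse"
    proof (intro exI conjI)
      show "unitary U" by fact
      show "opnorm (P' ** (H' + kron Helse (mat 1)) ** P' - U ** kron (H + Helse) P ** cadj U)
            \<le> \<epsilon> + 2 * \<eta> * opnorm Helse"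
        using eq[unfolded X_def] opnorm_add[of E1 E2] E1 E2 by simp
    qed
  qed
qed

end
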